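(* Let $X,X_1,X_2,\dots$ be real random variables on a probability space $(\Omega,\mathcal{F},P)$. Suppose that for every $\varepsilon>0$, $\sum_{n=1}^\infty P(|X_n-X|\ge\varepsilon)<\infty$, and that for some $\varepsilon>0$, $\sum_{n=1}^\infty E\big[|X_n-X|\,I_{\{|X_n-X|<\varepsilon\}}\big]<\infty$. Then for every bounded Lipschitz continuous function $f:\mathbb{R}\to\mathbb{R}$, $\sum_{n=1}^\infty E[|f(X_n)-f(X)|]<\infty$. Consequently, for every bounded Lipschitz continuous function $f:\mathbb{R}\to\mathbb{R}$, $\sum_{n=1}^\infty |E[f(X_n)-f(X)]|<\infty$.
   Context: $I_A$ denotes the indicator function of the event $A$. *)

theory Defs
  imports "HOL-Probability.Probability"
begin

end

theory Submission
  imports Defs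
begin

theorem proposition3p3:
  fixes M :: "'a measure" and X :: "'a \<Rightarrow> real" and Xn :: "nat \<Rightarrow> 'a \<Rightarrow> real"
  assumes "prob_space M"
    and "X \<in> borel_measurable M"
    and "\<And>n. Xn n \<in> borel_measurable M"
    and "\<And>\<epsilon>::real. \<epsilon> > 0 \<Longrightarrow>
           summable (\<lambda>n. measure M {\<omega> \<in> space M. \<bar>Xn (Suc n) \<omega> - X \<omega>\<bar> \<ge> \<epsilon>})"
    and "\<exists>\<epsilon>::real. \<epsilon> > 0 \<and>
           summable (\<lambda>n. integral\<^sup>L M (\<lambda>\<omega>. \<bar>Xn (Suc n) \<omega> - X \<omega>\<bar> *
              indicator {\<omega> \<in> space M. \<bar>Xn (Suc n) \<omega> - X \<omega>\<bar> < \<epsilon>} \<omega>))"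
  shows "\<forall>f :: real \<Rightarrow> real. bounded (range f) \<and> (\<exists>L. L-lipschitz_on UNIV f) \<longrightarrow>
           summable (\<lambda>n. integral\<^sup>L M (\<lambda>\<omega>. \<bar>f (Xn (Suc n) \<omega>) - f (X \<omega>)\<bar>))
           \<and> summable (\<lambda>n. \<bar>integral\<^sup>L M (\<lambda>\<omega>. f (Xn (Suc n) \<omega>) - f (X \<omega>))\<bar>)"
proof (intro allI impI)
  fix f :: "real \<Rightarrow> real"
  assume fa: "bounded (range f) \<and> (\<exists>L. L-lipschitz_on UNIV f)"
  interpret P: prob_space M by fact
  obtain L where L: "L-lipschitz_on UNIV f" using fa by blast
  have L0: "0 \<le> L" using L by (rule lipschitz_on_nonneg)
  obtain B where B: "\<And>x. \<bar>f x\<bar> \<le> B" using fa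
    by (metis bounded_real rangeI)
  obtain e where e: "e > 0" and se: "summable (\<lambda>n. integral\<^sup>L M (\<lambda>\<omega>. \<bar>Xn (Suc n) \<omega> - X \<omega>\<bar> *
              indicator {\<omega> \<in> space M. \<bar>Xn (Suc n) \<omega> - X \<omega>\<bar> < e} \<omega>))" using assms(5) by blast
  have sp: "summable (\<lambda>n. measure M {\<omega> \<in> space M. \<bar>Xn (Suc n) \<omega> - X \<omega>\<bar> \<ge> e})"
    using assms(4) e by blast
  have fc: "continuous_on UNIV f" using L by (rule lipschitz_on_continuous_on)
  have fm: "f \<in> borel_measurable borel" using fc by (rule borel_measurable_continuous_onI)
  define D where "D n \<omega> = \<bar>Xn (Suc n) \<omega> - X \<omega>\<bar>" for n \<omega>
  have Dm: "D n \<in> borel_measurable M" for n unfolding D_def using assms(2,3) by measurable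
  have S1: "{\<omega> \<in> space M. D n \<omega> < e} \<in> sets M" for n using Dm by measurable
  have S2: "{\<omega> \<in> space M. D n \<omega> \<ge> e} \<in> sets M" for n using Dm by measurable
  have gm: "(\<lambda>\<omega>. \<bar>f (Xn (Suc n) \<omega>) - f (X \<omega>)\<bar>) \<in> borel_measurable M" for n
    using fm assms(2,3) by measurable
  have gi: "integrable M (\<lambda>\<omega>. \<bar>f (Xn (Suc n) \<omega>) - f (X \<omega>)\<bar>)" for n
  proof (rule P.integrable_const_bound[where B="2*B"])
    show "AE x in M. norm \<bar>f (Xn (Suc n) x) - f (X x)\<bar> \<le> 2 * B"
    proof (intro AE_I2)
      fix x
      show "norm \<bar>f (Xn (Suc n) x) - f (X x)\<bar> \<le> 2 * B"
        using B[of "Xn (Suc n) x"] B[of "X x"] by simp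
    qed
  qed (rule gm)
  have h1i: "integrable M (\<lambda>\<omega>. D n \<omega> * indicator {\<omega> \<in> space M. D n \<omega> < e} \<omega>)" for n
  proof (rule P.integrable_const_bound[where B="e"])
    show "AE x in M. norm (D n x * indicator {\<omega> \<in> space M. D n \<omega> < e} x) \<le> e"
      using e by (auto intro!: AE_I2 simp: indicator_def D_def)
  qed (use Dm S1 in measurable)
  have h2i: "integrable M (\<lambda>\<omega>. indicator {\<omega> \<in> space M. D n \<omega> \<ge> e} \<omega> :: real)" for n
    using S2 by (intro integrable_real_indicator) (auto simp: P.emeasure_eq_measure)
  have bound: "integral\<^sup>L M (\<lambda>\<omega>. \<bar>f (Xn (Suc n) \<omega>) - f (X \<omega>)\<bar>) \<le>
     L * integral\<^sup>L M (\<lambda>\<omega>. D n \<omega> * indicator {\<omega> \<in> space M. D n \<omega> < e} \<omega>)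
     + 2 * B * measure M {\<omega> \<in> space M. D n \<omega> \<ge> e}" for n
  proof -
    have "integral\<^sup>L M (\<lambda>\<omega>. \<bar>f (Xn (Suc n) \<omega>) - f (X \<omega>)\<bar>) \<le>
       integral\<^sup>L M (\<lambda>\<omega>. L * (D n \<omega> * indicator {\<omega> \<in> space M. D n \<omega> < e} \<omega>)
         + 2 * B * indicator {\<omega> \<in> space M. D n \<omega> \<ge> e} \<omega>)"
    proof (rule integral_mono)
      show "integrable M (\<lambda>\<omega>. L * (D n \<omega> * indicator {\<omega> \<in> space M. D n \<omega> < e} \<omega>)
         + 2 * B * indicator {\<omega> \<in> space M. D n \<omega> \<ge> e} \<omega>)"
        using h1i h2i by auto
      fix \<omega> assume w: "\<omega> \<in> space M"
      have lip: "\<bar>f (Xn (Suc n) \<omega>) - f (X \<omega>)\<bar> \<le> L * D n \<omega>"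
        using lipschitz_onD[OF L, of "Xn (Suc n) \<omega>" "X \<omega>"] by (simp add: dist_real_def D_def)
      have bb: "\<bar>f (Xn (Suc n) \<omega>) - f (X \<omega>)\<bar> \<le> 2 * B"
        using B[of "Xn (Suc n) \<omega>"] B[of "X \<omega>"] by linarith
      show "\<bar>f (Xn (Suc n) \<omega>) - f (X \<omega>)\<bar> \<le> L * (D n \<omega> * indicator {\<omega> \<in> space M. D n \<omega> < e} \<omega>)
         + 2 * B * indicator {\<omega> \<in> space M. D n \<omega> \<ge> e} \<omega>"
        using lip bb w by (cases "D n \<omega> < e") (auto simp: indicator_def)
    qed (rule gi)
    also have "\<dots> = L * integral\<^sup>L M (\<lambda>\<omega>. D n \<omega> * indicator {\<omega> \<in> space M. D n \<omega> < e} \<omega>)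
     + 2 * B * measure M {\<omega> \<in> space M. D n \<omega> \<ge> e}"
      using h1i h2i S2 by simp
    finally show ?thesis .
  qed
  have s1: "summable (\<lambda>n. integral\<^sup>L M (\<lambda>\<omega>. \<bar>f (Xn (Suc n) \<omega>) - f (X \<omega>)\<bar>))"
  proof (rule summable_comparison_test)
    show "\<exists>N. \<forall>n\<ge>N. norm (integral\<^sup>L M (\<lambda>\<omega>. \<bar>f (Xn (Suc n) \<omega>) - f (X \<omega>)\<bar>)) \<le>
       L * integral\<^sup>L M (\<lambda>\<omega>. D n \<omega> * indicator {\<omega> \<in> space M. D n \<omega> < e} \<omega>)
     + 2 * B * measure M {\<omega> \<in> space M. D n \<omega> \<ge> e}"
      using bound by auto
    show "summable (\<lambda>n. L * integral\<^sup>L M (\<lambda>\<omega>. D n \<omega> * indicator {\<omega> \<in> space M. D n \<omega> < e} \<omega>)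
     + 2 * B * measure M {\<omega> \<in> space M. D n \<omega> \<ge> e})"
      using se sp unfolding D_def by (intro summable_add summable_mult) auto
  qed
  have s2: "summable (\<lambda>n. \<bar>integral\<^sup>L M (\<lambda>\<omega>. f (Xn (Suc n) \<omega>) - f (X \<omega>))\<bar>)"
  proof (rule summable_comparison_test[OF _ s1])
    show "\<exists>N. \<forall>n\<ge>N. norm \<bar>integral\<^sup>L M (\<lambda>\<omega>. f (Xn (Suc n) \<omega>) - f (X \<omega>))\<bar> \<le>
       integral\<^sup>L M (\<lambda>\<omega>. \<bar>f (Xn (Suc n) \<omega>) - f (X \<omega>)\<bar>)"
      using integral_norm_bound[of M "\<lambda>\<omega>. f (Xn (Suc _) \<omega>) - f (X \<omega>)"] by auto
  qed
  show "summable (\<lambda>n. integral\<^sup>L M (\<lambda>\<omega>. \<bar>f (Xn (Suc n) \<omega>) - f (X \<omega>)\<bar>))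
           \<and> summable (\<lambda>n. \<bar>integral\<^sup>L M (\<lambda>\<omega>. f (Xn (Suc n) \<omega>) - f (X \<omega>))\<bar>)"
    using s1 s2 by blast
qed

end
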